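(* Let $\mathcal{C}$ be a code and let $m$ be its minimum neuron number. Then $\mathcal{C}$ is isomorphic to a reduced code $\mathcal{D}\subseteq 2^{[m]}$. Moreover this reduced representative is unique up to permutation of neurons: if $\mathcal{D}\subseteq 2^{[m]}$ and $\mathcal{D}'\subseteq 2^{[m']}$ are reduced codes both isomorphic to $\mathcal{C}$, then $m=m'$ and there is a permutation $w$ of $[m]$ with $\mathcal{D}'=\{w(d)\mid d\in\mathcal{D}\}$.
   Context: A code is a subset $\mathcal{C}\subseteq 2^{[n]}$; elements are codewords. For $\sigma\subseteq[n]$, $\mathrm{Tk}_{\mathcal{C}}(\sigma)=\{c\in\mathcal{C}\mid\sigma\subseteq c\}$, and $\mathrm{Tk}_{\mathcal{C}}(i)$ means $\mathrm{Tk}_{\mathcal{C}}(\{i\})$. A trunk in $\mathcal{C}$ is a subset of $\mathcal{C}$ that is empty or equal to $\mathrm{Tk}_{\mathcal{C}}(\sigma)$ for some $\sigma\subseteq[n]$. A function $f:\mathcal{C}\to\mathcal{D}$ between codes is a morphism if preimages of trunks in $\mathcal{D}$ are trunks in $\mathcal{C}$; an isomorphism is a morphism with an inverse function that is a morphism. A neuron $i\in[n]$ is trivial in $\mathcal{C}\subseteq 2^{[n]}$ if $\mathrm{Tk}_{\mathcal{C}}(i)=\emptyset$. A nontrivial neuron $i$ is redundant if there is $\sigma\subseteq[n]$ with $i\notin\sigma$ and $\mathrm{Tk}_{\mathcal{C}}(i)=\mathrm{Tk}_{\mathcal{C}}(\sigma)$. A code $\mathcal{C}\subseteq 2^{[n]}$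 is reduced if no neuron of $[n]$ is trivial or redundant. The minimum neuron number of $\mathcal{C}$ is the smallest $m$ such that $\mathcal{C}$ is isomorphic to a code contained in $2^{[m]}$. *)

theory Defs
  imports Main
begin

definition code :: "nat \<Rightarrow> nat set set \<Rightarrow> bool" where
  "code n C \<longleftrightarrow> C \<subseteq> Pow {1..n}"

definition Tk :: "nat set set \<Rightarrow> nat set \<Rightarrow> nat set set" where
  "Tk C \<sigma> = {c \<in> C. \<sigma> \<subseteq> c}"

definition trunk :: "nat \<Rightarrow> nat set set \<Rightarrow> nat set set \<Rightarrow> bool" where
  "trunk n C T \<longleftrightarrow> T = {} \<or> (\<exists>\<sigma>. \<sigma> \<subseteq> {1..n} \<and> T = Tk C \<sigma>)"

definition morphism :: "nat \<Rightarrow> nat set set \<Rightarrow> nat \<Rightarrow> nat set set \<Rightarrow> (nat set \<Rightarrow> nat set) \<Rightarrow> bool" where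
  "morphism n C m D f \<longleftrightarrow> (\<forall>c\<in>C. f c \<in> D) \<and>
     (\<forall>T. trunk m D T \<longrightarrow> trunk n C {c \<in> C. f c \<in> T})"

definition isomorphic :: "nat \<Rightarrow> nat set set \<Rightarrow> nat \<Rightarrow> nat set set \<Rightarrow> bool" where
  "isomorphic n C m D \<longleftrightarrow> (\<exists>f g. morphism n C m D f \<and> morphism m D n C g \<and>
     (\<forall>c\<in>C. g (f c) = c) \<and> (\<forall>d\<in>D. f (g d) = d))"

definition trivial_neuron :: "nat set set \<Rightarrow> nat \<Rightarrow> bool" where
  "trivial_neuron C i \<longleftrightarrow> Tk C {i} = {}"

definition redundant_neuron :: "nat \<Rightarrow> nat set set \<Rightarrow> nat \<Rightarrow> bool" where
  "redundant_neuron n C i \<longleftrightarrow> \<not> trivial_neuron C i \<and>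
     (\<exists>\<sigma>. \<sigma> \<subseteq> {1..n} \<and> i \<notin> \<sigma> \<and> Tk C {i} = Tk C \<sigma>)"

definition reduced :: "nat \<Rightarrow> nat set set \<Rightarrow> bool" where
  "reduced n C \<longleftrightarrow> (\<forall>i\<in>{1..n}. \<not> trivial_neuron C i \<and> \<not> redundant_neuron n C i)"

definition min_neuron_number :: "nat \<Rightarrow> nat set set \<Rightarrow> nat" where
  "min_neuron_number n C = (LEAST m. \<exists>D. code m D \<and> isomorphic n C m D)"

end

theory Submission
  imports Defs
begin

definition Irr :: "nat \<Rightarrow> nat set set \<Rightarrow> nat set set set" where
  "Irr n C = {T. trunk n C T \<and> T \<noteq> {} \<and> T \<noteq> C \<and>
     (\<exists>c\<in>C - T. \<forall>S. trunk n C S \<and> T \<subset> S \<longrightarrow> c \<in> S)}"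

lemma trunk_sub: "trunk n C T \<Longrightarrow> T \<subseteq> C"
  by (auto simp: trunk_def Tk_def)

lemma Tk_trunk: "\<sigma> \<subseteq> {1..n} \<Longrightarrow> trunk n C (Tk C \<sigma>)"
  by (auto simp: trunk_def)

lemma Tk_empty: "Tk C {} = C"
  by (auto simp: Tk_def)

lemma irr_Tk:
  assumes "T \<in> Irr n C" shows "\<exists>i\<in>{1..n}. T = Tk C {i}"
proof -
  from assms have tT: "trunk n C T" and ne: "T \<noteq> {}"
    and "\<exists>c\<in>C - T. \<forall>S. trunk n C S \<and> T \<subset> S \<longrightarrow> c \<in> S"
    unfolding Irr_def by auto
  then obtain c0 where c0: "c0 \<in> C" "c0 \<notin> T" "\<forall>S. trunk n C S \<and> T \<subset> S \<longrightarrow> c0 \<in> S"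
    by blast
  from tT ne obtain \<sigma> where \<sigma>: "\<sigma> \<subseteq> {1..n}" "T = Tk C \<sigma>"
    unfolding trunk_def by blast
  obtain i where i: "i \<in> \<sigma>" "i \<notin> c0" using c0 \<sigma> by (auto simp: Tk_def)
  have "T \<subseteq> Tk C {i}" using \<sigma> i by (auto simp: Tk_def)
  moreover have "trunk n C (Tk C {i})" using \<sigma> i by (intro Tk_trunk) auto
  moreover have "c0 \<notin> Tk C {i}" using i by (auto simp: Tk_def)
  ultimately have "T = Tk C {i}" using c0 by blast
  thus ?thesis using \<sigma> i by blast
qed

lemma Irr_sub: "Irr n C \<subseteq> (\<lambda>i. Tk C {i}) ` {1..n}"
  by (blast dest: irr_Tk)

lemma Irr_finite: "finite (Irr n C)"
  by (rule finite_subset[OF Irr_sub]) simp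

lemma Irr_card: "card (Irr n C) \<le> n"
proof -
  have "card (Irr n C) \<le> card ((\<lambda>i. Tk C {i}) ` {1..n})"
    by (rule card_mono[OF _ Irr_sub]) simp
  also have "\<dots> \<le> card {1..n}" by (rule card_image_le) simp
  finally show ?thesis by simp
qed

lemma iso_Irr:
  assumes f: "morphism n C m D f" and g: "morphism m D n C g"
    and gf: "\<forall>c\<in>C. g (f c) = c" and fg: "\<forall>d\<in>D. f (g d) = d"
    and TI: "T \<in> Irr m D"
  shows "{c\<in>C. f c \<in> T} \<in> Irr n C"
proof -
  from TI obtain d0 where T: "trunk m D T" "T \<noteq> {}" "T \<noteq> D"
    and d0: "d0 \<in> D" "d0 \<notin> T" "\<forall>S. trunk m D S \<and> T \<subset> S \<longrightarrow> d0 \<in> S"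
    unfolding Irr_def by blast
  let ?P = "{c\<in>C. f c \<in> T}"
  have TD: "T \<subseteq> D" using T(1) trunk_sub by blast
  have tP: "trunk n C ?P" using f T(1) unfolding morphism_def by blast
  have fD: "\<forall>c\<in>C. f c \<in> D" and gC: "\<forall>d\<in>D. g d \<in> C"
    using f g unfolding morphism_def by auto
  obtain d where d: "d \<in> T" using T(2) by blast
  have "g d \<in> ?P" using d TD gC fg by auto
  hence Pne: "?P \<noteq> {}" by blast
  have w: "g d0 \<in> C - ?P" using d0 gC fg by auto
  have "\<forall>S. trunk n C S \<and> ?P \<subset> S \<longrightarrow> g d0 \<in> S"
  proof (intro allI impI)
    fix S assume S: "trunk n C S \<and> ?P \<subset> S"
    let ?S' = "{d\<in>D. g d \<in> S}"
    have tS': "trunk m D ?S'" using g S unfolding morphism_def by blast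
    have "T \<subseteq> ?S'"
    proof
      fix x assume "x \<in> T"
      thus "x \<in> ?S'" using TD gC fg S by force
    qed
    moreover obtain c where c: "c \<in> S" "c \<notin> ?P" using S by blast
    moreover have "c \<in> C" using c S trunk_sub by blast
    ultimately have "f c \<in> ?S'" "f c \<notin> T" using fD gf by auto
    hence "T \<subset> ?S'" using \<open>T \<subseteq> ?S'\<close> by blast
    hence "d0 \<in> ?S'" using d0 tS' by blast
    thus "g d0 \<in> S" by blast
  qed
  thus ?thesis using tP Pne w unfolding Irr_def by blast
qed

lemma iso_card:
  assumes "isomorphic n C m D" shows "card (Irr n C) = card (Irr m D)"
proof -
  from assms obtain f g where f: "morphism n C m D f" and g: "morphism m D n C g"
    and gf: "\<forall>c\<in>C. g (f c) = c" and fg: "\<forall>d\<in>D. f (g d) = d"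
    unfolding isomorphic_def by blast
  have fD: "\<forall>c\<in>C. f c \<in> D" and gC: "\<forall>d\<in>D. g d \<in> C"
    using f g unfolding morphism_def by auto
  have "bij_betw (\<lambda>T. {c\<in>C. f c \<in> T}) (Irr m D) (Irr n C)"
  proof (rule bij_betw_byWitness[where f'="\<lambda>S. {d\<in>D. g d \<in> S}"])
    show "\<forall>T\<in>Irr m D. {d \<in> D. g d \<in> {c \<in> C. f c \<in> T}} = T"
    proof
      fix T assume "T \<in> Irr m D"
      hence "T \<subseteq> D" unfolding Irr_def using trunk_sub by blast
      thus "{d \<in> D. g d \<in> {c \<in> C. f c \<in> T}} = T" using gC fg by force
    qed
    show "\<forall>S\<in>Irr n C. {c \<in> C. f c \<in> {d \<in> D. g d \<in> S}} = S"
    proof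
      fix T assume "T \<in> Irr n C"
      hence "T \<subseteq> C" unfolding Irr_def using trunk_sub by blast
      thus "{c \<in> C. f c \<in> {d \<in> D. g d \<in> T}} = T" using fD gf by force
    qed
    show "(\<lambda>T. {c \<in> C. f c \<in> T}) ` Irr m D \<subseteq> Irr n C"
      using iso_Irr[OF f g gf fg] by blast
    show "(\<lambda>S. {d \<in> D. g d \<in> S}) ` Irr n C \<subseteq> Irr m D"
      using iso_Irr[OF g f fg gf] by blast
  qed
  thus ?thesis by (simp add: bij_betw_same_card)
qed


lemma reduced_Irr:
  assumes cD: "code m D" and rD: "reduced m D"
  shows "Irr m D = (\<lambda>i. Tk D {i}) ` {1..m}" and "inj_on (\<lambda>i. Tk D {i}) {1..m}"
proof -
  have mem: "Tk D {i} \<in> Irr m D" if i: "i \<in> {1..m}" for i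
  proof -
    have nt: "Tk D {i} \<noteq> {}" using rD i unfolding reduced_def trivial_neuron_def by blast
    have nr: "\<not>(\<exists>\<sigma>. \<sigma> \<subseteq> {1..m} \<and> i \<notin> \<sigma> \<and> Tk D {i} = Tk D \<sigma>)"
      using rD i nt unfolding reduced_def redundant_neuron_def trivial_neuron_def by blast
    have nD: "Tk D {i} \<noteq> D"
    proof
      assume "Tk D {i} = D"
      hence "Tk D {i} = Tk D {}" by (simp add: Tk_empty)
      thus False using nr by blast
    qed
    have tr: "trunk m D (Tk D {i})" using i by (intro Tk_trunk) auto
    have "\<exists>c\<in>D - Tk D {i}. \<forall>S. trunk m D S \<and> Tk D {i} \<subset> S \<longrightarrow> c \<in> S"
    proof (rule ccontr)
      assume H: "\<not> (\<exists>c\<in>D - Tk D {i}. \<forall>S. trunk m D S \<and> Tk D {i} \<subset> S \<longrightarrow> c \<in> S)"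
      define \<sigma> where "\<sigma> = {j\<in>{1..m}. j \<noteq> i \<and> Tk D {i} \<subseteq> Tk D {j}}"
      have "Tk D {i} = Tk D \<sigma>"
      proof
        show "Tk D {i} \<subseteq> Tk D \<sigma>"
        proof
          fix c assume c: "c \<in> Tk D {i}"
          hence "\<forall>j\<in>\<sigma>. c \<in> Tk D {j}" unfolding \<sigma>_def by blast
          thus "c \<in> Tk D \<sigma>" using c unfolding Tk_def by blast
        qed
        show "Tk D \<sigma> \<subseteq> Tk D {i}"
        proof
          fix c assume c: "c \<in> Tk D \<sigma>"
          show "c \<in> Tk D {i}"
          proof (rule ccontr)
            assume nc: "c \<notin> Tk D {i}"
            have cD: "c \<in> D" using c unfolding Tk_def by blast
            then obtain S where S: "trunk m D S" "Tk D {i} \<subset> S" "c \<notin> S"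
              using H nc by blast
            have "S \<noteq> {}" using S(2) by blast
            then obtain \<tau> where \<tau>: "\<tau> \<subseteq> {1..m}" "S = Tk D \<tau>"
              using S(1) unfolding trunk_def by blast
            obtain j where j: "j \<in> \<tau>" "j \<notin> c" using \<tau> cD S(3) unfolding Tk_def by blast
            have Sj: "S \<subseteq> Tk D {j}" using \<tau> j unfolding Tk_def by blast
            have "j \<noteq> i" using Sj S(2) by blast
            hence "j \<in> \<sigma>" unfolding \<sigma>_def using j \<tau> Sj S(2) by blast
            hence "j \<in> c" using c unfolding Tk_def by blast
            thus False using j by blast
          qed
        qed
      qed
      moreover have "\<sigma> \<subseteq> {1..m}" "i \<notin> \<sigma>" unfolding \<sigma>_def by auto
      ultimately show False using nr by blast
    qed
    thus ?thesis unfolding Irr_def using tr nt nD by blast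
  qed
  show "Irr m D = (\<lambda>i. Tk D {i}) ` {1..m}"
    using mem Irr_sub by blast
  show "inj_on (\<lambda>i. Tk D {i}) {1..m}"
  proof (rule inj_onI)
    fix i j assume i: "i \<in> {1..m}" and j: "j \<in> {1..m}" and e: "Tk D {i} = Tk D {j}"
    show "i = j"
    proof (rule ccontr)
      assume "i \<noteq> j"
      moreover have "Tk D {i} \<noteq> {}" using rD i unfolding reduced_def trivial_neuron_def by blast
      ultimately have "redundant_neuron m D i"
        unfolding redundant_neuron_def trivial_neuron_def using e j by blast
      thus False using rD i unfolding reduced_def by blast
    qed
  qed
qed

lemma reduced_card:
  assumes "code m D" "reduced m D" shows "card (Irr m D) = m"
  using reduced_Irr[OF assms] by (simp add: card_image)

lemma irr_sep:
  assumes fin: "finite C"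
  shows "trunk n C T \<Longrightarrow> T \<noteq> {} \<Longrightarrow> c \<in> C \<Longrightarrow> (\<forall>T'\<in>Irr n C. T \<subseteq> T' \<longrightarrow> c \<in> T') \<Longrightarrow> c \<in> T"
proof (induction "card C - card T" arbitrary: T rule: less_induct)
  case less
  show ?case
  proof (rule ccontr)
    assume cT: "c \<notin> T"
    have TC: "T \<subseteq> C" using less.prems(1) trunk_sub by blast
    have "T \<notin> Irr n C" using less.prems(4) cT by blast
    moreover have "T \<noteq> C" using cT less.prems(3) by blast
    ultimately have "\<not> (\<exists>c\<in>C - T. \<forall>S. trunk n C S \<and> T \<subset> S \<longrightarrow> c \<in> S)"
      using less.prems(1,2) unfolding Irr_def by blast
    then obtain S where S: "trunk n C S" "T \<subset> S" "c \<notin> S" using less.prems(3) cT by blast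
    have SC: "S \<subseteq> C" using S(1) trunk_sub by blast
    have "card T < card S" using S(2) SC fin by (meson finite_subset psubset_card_mono)
    moreover have "card S \<le> card C" using SC fin by (simp add: card_mono)
    ultimately have lt: "card C - card S < card C - card T" by linarith
    have "c \<in> S"
      by (rule less.hyps[OF lt S(1)]) (use S(2) less.prems(3,4) in auto)
    thus False using S(3) by blast
  qed
qed

lemma trunk_Inter:
  assumes "\<forall>T\<in>\<T>. trunk n C T"
  shows "trunk n C {c\<in>C. \<forall>T\<in>\<T>. c \<in> T}"
proof (cases "{} \<in> \<T>")
  case True
  hence "{c\<in>C. \<forall>T\<in>\<T>. c \<in> T} = {}" by blast
  thus ?thesis unfolding trunk_def by simp
next
  case False
  define s where "s T = (SOME \<sigma>. \<sigma> \<subseteq> {1..n} \<and> T = Tk C \<sigma>)" for T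
  have s: "s T \<subseteq> {1..n} \<and> T = Tk C (s T)" if "T \<in> \<T>" for T
  proof -
    have "T \<noteq> {}" using False that by blast
    hence "\<exists>\<sigma>. \<sigma> \<subseteq> {1..n} \<and> T = Tk C \<sigma>" using assms that unfolding trunk_def by blast
    thus ?thesis unfolding s_def by (rule someI_ex)
  qed
  have "{c\<in>C. \<forall>T\<in>\<T>. c \<in> T} = Tk C (\<Union>(s ` \<T>))"
  proof (rule set_eqI)
    fix c
    have "(\<forall>T\<in>\<T>. c \<in> T) \<longleftrightarrow> (\<forall>T\<in>\<T>. c \<in> Tk C (s T))"
      using s by (metis (no_types, lifting))
    thus "c \<in> {c\<in>C. \<forall>T\<in>\<T>. c \<in> T} \<longleftrightarrow> c \<in> Tk C (\<Union>(s ` \<T>))"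
      unfolding Tk_def by blast
  qed
  moreover have "\<Union>(s ` \<T>) \<subseteq> {1..n}" using s by blast
  ultimately show ?thesis using Tk_trunk by simp
qed


lemma code_finite: "code n C \<Longrightarrow> finite C"
  unfolding code_def by (rule finite_subset[where B="Pow {1..n}"]) auto

lemma construct:
  assumes cC: "code n C"
  shows "\<exists>D. code (card (Irr n C)) D \<and> reduced (card (Irr n C)) D \<and> isomorphic n C (card (Irr n C)) D"
proof -
  define k where "k = card (Irr n C)"
  have fin: "finite C" using cC by (rule code_finite)
  obtain e where e: "bij_betw e {1..k} (Irr n C)"
    unfolding k_def using ex_bij_betw_nat_finite_1[OF Irr_finite[of n C]] by blast
  have eI: "e j \<in> Irr n C" if "j \<in> {1..k}" for j using e that by (rule bij_betw_apply)
  have eimg: "e ` {1..k} = Irr n C" using e by (simp add: bij_betw_def)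
  have eS: "\<exists>j\<in>{1..k}. e j = T" if "T \<in> Irr n C" for T
  proof -
    have "T \<in> e ` {1..k}" using that eimg by simp
    then obtain j where "j \<in> {1..k}" "T = e j" by (rule imageE)
    thus ?thesis by blast
  qed
  have einj: "inj_on e {1..k}" using e by (simp add: bij_betw_def)
  have et: "trunk n C (e j)" if "j \<in> {1..k}" for j using eI[OF that] by (simp add: Irr_def)
  have eC: "e j \<subseteq> C" if "j \<in> {1..k}" for j using et[OF that] trunk_sub by blast
  define F where "F c = {j\<in>{1..k}. c \<in> e j}" for c
  define D where "D = F ` C"
  have codeD: "code k D" unfolding code_def D_def F_def by blast
  have sep: "F a \<noteq> F b" if a: "a \<in> C" and b: "b \<in> C" and ia: "i \<in> a" and ib: "i \<notin> b" for a b i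
  proof -
    have "i \<in> {1..n}" using cC a ia unfolding code_def by blast
    hence tT: "trunk n C (Tk C {i})" by (intro Tk_trunk) auto
    have aT: "a \<in> Tk C {i}" and bT: "b \<notin> Tk C {i}" using a ia ib unfolding Tk_def by auto
    have ne: "Tk C {i} \<noteq> {}" using aT by blast
    have "\<not> (\<forall>T'\<in>Irr n C. Tk C {i} \<subseteq> T' \<longrightarrow> b \<in> T')"
    proof
      assume "\<forall>T'\<in>Irr n C. Tk C {i} \<subseteq> T' \<longrightarrow> b \<in> T'"
      hence "b \<in> Tk C {i}" by (rule irr_sep[OF fin tT ne b])
      thus False using bT by contradiction
    qed
    then obtain T' where T': "T' \<in> Irr n C" "Tk C {i} \<subseteq> T'" "b \<notin> T'" by blast
    then obtain j where j: "j \<in> {1..k}" "e j = T'" using eS by blast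
    have "j \<in> F a" using j T' aT unfolding F_def by blast
    moreover have "j \<notin> F b" using j T' unfolding F_def by blast
    ultimately show ?thesis by blast
  qed
  have injF: "inj_on F C"
  proof (rule inj_onI)
    fix a b assume a: "a \<in> C" and b: "b \<in> C" and eq: "F a = F b"
    show "a = b"
    proof (rule ccontr)
      assume "a \<noteq> b"
      then obtain i where "i \<in> a \<and> i \<notin> b \<or> i \<in> b \<and> i \<notin> a" by blast
      thus False
      proof
        assume "i \<in> a \<and> i \<notin> b" thus False using sep[OF a b, of i] eq by blast
      next
        assume "i \<in> b \<and> i \<notin> a" thus False using sep[OF b a, of i] eq by blast
      qed
    qed
  qed
  define G where "G = the_inv_into C F"
  have GF: "\<forall>c\<in>C. G (F c) = c" unfolding G_def using injF by (simp add: the_inv_into_f_f)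
  have GC: "\<forall>d\<in>D. G d \<in> C" unfolding G_def D_def using injF by (auto intro: the_inv_into_into)
  have FG: "\<forall>d\<in>D. F (G d) = d" unfolding G_def D_def using injF by (auto simp: f_the_inv_into_f)
  have FD: "\<forall>c\<in>C. F c \<in> D" unfolding D_def by blast
  have mF: "morphism n C k D F"
    unfolding morphism_def
  proof (intro conjI allI impI)
    show "\<forall>c\<in>C. F c \<in> D" by (rule FD)
    fix T assume T: "trunk k D T"
    show "trunk n C {c \<in> C. F c \<in> T}"
    proof (cases "T = {}")
      case True thus ?thesis unfolding trunk_def by simp
    next
      case False
      then obtain \<tau> where \<tau>: "\<tau> \<subseteq> {1..k}" "T = Tk D \<tau>" using T unfolding trunk_def by auto
      have eq: "{c \<in> C. F c \<in> T} = {c\<in>C. \<forall>T'\<in>e ` \<tau>. c \<in> T'}"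
      proof (rule Collect_cong)
        fix c
        have "F c \<in> T \<longleftrightarrow> (c \<in> C \<longrightarrow> \<tau> \<subseteq> F c)" if "c \<in> C"
          using that FD \<tau>(2) unfolding Tk_def by auto
        moreover have "\<tau> \<subseteq> F c \<longleftrightarrow> (\<forall>j\<in>\<tau>. c \<in> e j)"
          using \<tau>(1) unfolding F_def by auto
        ultimately show "(c \<in> C \<and> F c \<in> T) = (c \<in> C \<and> (\<forall>T'\<in>e ` \<tau>. c \<in> T'))"
          by auto
      qed
      have "\<forall>T'\<in>e ` \<tau>. trunk n C T'" using et \<tau>(1) by auto
      hence "trunk n C {c\<in>C. \<forall>T'\<in>e ` \<tau>. c \<in> T'}" by (rule trunk_Inter)
      thus ?thesis using eq by simp
    qed
  qed
  have mG: "morphism k D n C G"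
    unfolding morphism_def
  proof (intro conjI allI impI)
    show "\<forall>d\<in>D. G d \<in> C" by (rule GC)
    fix T assume T: "trunk n C T"
    have TC: "T \<subseteq> C" using T trunk_sub by blast
    have pre: "{d \<in> D. G d \<in> T} = F ` T"
    proof
      show "{d \<in> D. G d \<in> T} \<subseteq> F ` T"
      proof
        fix d assume "d \<in> {d \<in> D. G d \<in> T}"
        hence "d \<in> D" "G d \<in> T" by auto
        hence "d = F (G d)" "G d \<in> T" using FG by auto
        thus "d \<in> F ` T" by (rule image_eqI)
      qed
      show "F ` T \<subseteq> {d \<in> D. G d \<in> T}" using TC GF FD by auto
    qed
    show "trunk k D {d \<in> D. G d \<in> T}"
    proof (cases "T = {}")
      case True thus ?thesis using pre unfolding trunk_def by simp
    next
      case False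
      define \<tau> where "\<tau> = {j\<in>{1..k}. T \<subseteq> e j}"
      have "F ` T = Tk D \<tau>"
      proof
        show "F ` T \<subseteq> Tk D \<tau>"
        proof
          fix d assume "d \<in> F ` T"
          then obtain c where c: "c \<in> T" "d = F c" by blast
          have "F c \<in> D" using c TC FD by blast
          moreover have "\<tau> \<subseteq> F c" unfolding \<tau>_def F_def using c(1) by blast
          ultimately show "d \<in> Tk D \<tau>" unfolding Tk_def using c by blast
        qed
        show "Tk D \<tau> \<subseteq> F ` T"
        proof
          fix d assume d: "d \<in> Tk D \<tau>"
          then obtain c where c: "c \<in> C" "d = F c" unfolding Tk_def D_def by blast
          have "\<tau> \<subseteq> F c" using d c unfolding Tk_def by blast
          have "\<forall>T'\<in>Irr n C. T \<subseteq> T' \<longrightarrow> c \<in> T'"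
          proof (intro ballI impI)
            fix T' assume T': "T' \<in> Irr n C" "T \<subseteq> T'"
            then obtain j where j: "j \<in> {1..k}" "e j = T'" using eS by blast
            hence "j \<in> \<tau>" unfolding \<tau>_def using T' by blast
            hence "j \<in> F c" using \<open>\<tau> \<subseteq> F c\<close> by blast
            thus "c \<in> T'" unfolding F_def using j by blast
          qed
          hence "c \<in> T" using irr_sep[OF fin T False c(1)] by blast
          thus "d \<in> F ` T" using c by blast
        qed
      qed
      moreover have "\<tau> \<subseteq> {1..k}" unfolding \<tau>_def by blast
      ultimately show ?thesis using pre Tk_trunk by simp
    qed
  qed
  have TkD: "Tk D {i} = F ` (e i)" if i: "i \<in> {1..k}" for i
    using i eC[OF i] unfolding Tk_def D_def F_def by auto
  have redD: "reduced k D"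
    unfolding reduced_def
  proof (intro ballI conjI)
    fix i assume i: "i \<in> {1..k}"
    have "e i \<noteq> {}" using eI[OF i] unfolding Irr_def by blast
    thus nt: "\<not> trivial_neuron D i" unfolding trivial_neuron_def using TkD[OF i] by simp
    show "\<not> redundant_neuron k D i"
    proof
      assume "redundant_neuron k D i"
      then obtain \<sigma> where \<sigma>: "\<sigma> \<subseteq> {1..k}" "i \<notin> \<sigma>" "Tk D {i} = Tk D \<sigma>"
        unfolding redundant_neuron_def by blast
      obtain c0 where c0: "c0 \<in> C" "c0 \<notin> e i" "\<forall>S. trunk n C S \<and> e i \<subset> S \<longrightarrow> c0 \<in> S"
        using eI[OF i] unfolding Irr_def by blast
      have key: "c \<in> e i \<longleftrightarrow> \<sigma> \<subseteq> F c" if c: "c \<in> C" for c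
      proof -
        have "c \<in> e i \<longleftrightarrow> F c \<in> Tk D {i}" using c i FD unfolding Tk_def F_def by auto
        also have "\<dots> \<longleftrightarrow> F c \<in> Tk D \<sigma>" using \<sigma>(3) by simp
        also have "\<dots> \<longleftrightarrow> \<sigma> \<subseteq> F c" using c FD unfolding Tk_def by auto
        finally show ?thesis .
      qed
      have "\<sigma> \<subseteq> F c0"
      proof
        fix l assume l: "l \<in> \<sigma>"
        have lk: "l \<in> {1..k}" using l \<sigma>(1) by blast
        have sub: "e i \<subseteq> e l"
        proof
          fix c assume c: "c \<in> e i"
          hence "c \<in> C" using eC[OF i] by blast
          hence "\<sigma> \<subseteq> F c" using key c by blast
          thus "c \<in> e l" using l unfolding F_def by blast
        qed
        have "e i \<noteq> e l" using einj i lk l \<sigma>(2) unfolding inj_on_def by blast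
        hence "c0 \<in> e l" using c0(3) et[OF lk] sub by blast
        thus "l \<in> F c0" unfolding F_def using lk by blast
      qed
      thus False using key[OF c0(1)] c0(2) by blast
    qed
  qed
  have "isomorphic n C k D"
    unfolding isomorphic_def using mF mG GF FG by blast
  thus ?thesis using codeD redD unfolding k_def by blast
qed


lemma morphism_comp:
  assumes g: "morphism m D n C g" and f: "morphism n C p E f"
  shows "morphism m D p E (f \<circ> g)"
  unfolding morphism_def
proof (intro conjI allI impI)
  have gC: "\<forall>d\<in>D. g d \<in> C" and fE: "\<forall>c\<in>C. f c \<in> E"
    using f g unfolding morphism_def by auto
  thus "\<forall>d\<in>D. (f \<circ> g) d \<in> E" by simp
  fix T assume T: "trunk p E T"
  have "trunk n C {c \<in> C. f c \<in> T}" using f T unfolding morphism_def by blast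
  hence "trunk m D {d \<in> D. g d \<in> {c \<in> C. f c \<in> T}}" using g unfolding morphism_def by blast
  moreover have "{d \<in> D. g d \<in> {c \<in> C. f c \<in> T}} = {d \<in> D. (f \<circ> g) d \<in> T}"
    using gC by auto
  ultimately show "trunk m D {d \<in> D. (f \<circ> g) d \<in> T}" by simp
qed

lemma iso_between:
  assumes "isomorphic n C m D" "isomorphic n C p E"
  shows "isomorphic m D p E"
proof -
  from assms(1) obtain f g where f: "morphism n C m D f" and g: "morphism m D n C g"
    and gf: "\<forall>c\<in>C. g (f c) = c" and fg: "\<forall>d\<in>D. f (g d) = d"
    unfolding isomorphic_def by blast
  from assms(2) obtain f' g' where f': "morphism n C p E f'" and g': "morphism p E n C g'"
    and gf': "\<forall>c\<in>C. g' (f' c) = c" and fg': "\<forall>d\<in>E. f' (g' d) = d"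
    unfolding isomorphic_def by blast
  have gC: "\<forall>d\<in>D. g d \<in> C" and gC': "\<forall>d\<in>E. g' d \<in> C"
    using g g' unfolding morphism_def by auto
  have m1: "morphism m D p E (f' \<circ> g)" by (rule morphism_comp[OF g f'])
  have m2: "morphism p E m D (f \<circ> g')" by (rule morphism_comp[OF g' f])
  have i1: "\<forall>d\<in>D. (f \<circ> g') ((f' \<circ> g) d) = d" using gC gf' fg by simp
  have i2: "\<forall>d\<in>E. (f' \<circ> g) ((f \<circ> g') d) = d" using gC' gf fg' by simp
  show ?thesis unfolding isomorphic_def using m1 m2 i1 i2 by blast
qed

lemma perm_unique:
  assumes cD: "code m D" and rD: "reduced m D" and cD': "code m D'" and rD': "reduced m D'"
    and iso: "isomorphic m D m D'"
  shows "\<exists>w. bij_betw w {1..m} {1..m} \<and> D' = (\<lambda>d. w ` d) ` D"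
proof -
  from iso obtain h h' where h: "morphism m D m D' h" and h': "morphism m D' m D h'"
    and hh: "\<forall>d\<in>D. h' (h d) = d" and hh': "\<forall>d\<in>D'. h (h' d) = d"
    unfolding isomorphic_def by blast
  have hD: "\<forall>d\<in>D. h d \<in> D'" and hD': "\<forall>d\<in>D'. h' d \<in> D"
    using h h' unfolding morphism_def by auto
  have IrrD: "Irr m D = (\<lambda>i. Tk D {i}) ` {1..m}" and injD: "inj_on (\<lambda>i. Tk D {i}) {1..m}"
    using reduced_Irr[OF cD rD] by auto
  have IrrD': "Irr m D' = (\<lambda>i. Tk D' {i}) ` {1..m}"
    using reduced_Irr[OF cD' rD'] by auto
  have exj: "\<exists>j. j \<in> {1..m} \<and> {d'\<in>D'. h' d' \<in> Tk D {i}} = Tk D' {j}" if i: "i \<in> {1..m}" for i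
  proof -
    have "Tk D {i} \<in> Irr m D" using IrrD i by simp
    hence "{d'\<in>D'. h' d' \<in> Tk D {i}} \<in> Irr m D'" by (rule iso_Irr[OF h' h hh' hh])
    hence "{d'\<in>D'. h' d' \<in> Tk D {i}} \<in> (\<lambda>i. Tk D' {i}) ` {1..m}" using IrrD' by simp
    thus ?thesis by blast
  qed
  define w where "w i = (SOME j. j \<in> {1..m} \<and> {d'\<in>D'. h' d' \<in> Tk D {i}} = Tk D' {j})" for i
  have w: "w i \<in> {1..m} \<and> {d'\<in>D'. h' d' \<in> Tk D {i}} = Tk D' {w i}" if i: "i \<in> {1..m}" for i
    unfolding w_def by (rule someI_ex[OF exj[OF i]])
  have key: "w i \<in> h d \<longleftrightarrow> i \<in> d" if i: "i \<in> {1..m}" and d: "d \<in> D" for i d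
  proof -
    have "w i \<in> h d \<longleftrightarrow> h d \<in> Tk D' {w i}" using hD d unfolding Tk_def by auto
    also have "\<dots> \<longleftrightarrow> h d \<in> {d'\<in>D'. h' d' \<in> Tk D {i}}" using w[OF i] by simp
    also have "\<dots> \<longleftrightarrow> d \<in> Tk D {i}" using hD hh d by auto
    also have "\<dots> \<longleftrightarrow> i \<in> d" using d unfolding Tk_def by auto
    finally show ?thesis .
  qed
  have winj: "inj_on w {1..m}"
  proof (rule inj_onI)
    fix i j assume i: "i \<in> {1..m}" and j: "j \<in> {1..m}" and e: "w i = w j"
    have "Tk D {i} = Tk D {j}"
      unfolding Tk_def using key[OF i] key[OF j] e by auto
    thus "i = j" using injD i j unfolding inj_on_def by blast
  qed
  have wimg: "w ` {1..m} = {1..m}"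
    by (rule endo_inj_surj) (use w winj in auto)
  have wb: "bij_betw w {1..m} {1..m}" using winj wimg by (simp add: bij_betw_def)
  have hw: "h d = w ` d" if d: "d \<in> D" for d
  proof
    have sub: "h d \<subseteq> {1..m}" using hD d cD' unfolding code_def by blast
    show "h d \<subseteq> w ` d"
    proof
      fix x assume x: "x \<in> h d"
      then have "x \<in> w ` {1..m}" using sub wimg by blast
      then obtain i where i: "i \<in> {1..m}" "x = w i" by blast
      hence "i \<in> d" using key[OF i(1) d] x by simp
      thus "x \<in> w ` d" using i by blast
    qed
    show "w ` d \<subseteq> h d"
    proof
      fix x assume "x \<in> w ` d"
      then obtain i where i: "i \<in> d" "x = w i" by blast
      have "i \<in> {1..m}" using i cD d unfolding code_def by blast
      thus "x \<in> h d" using key[OF _ d] i by blast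
    qed
  qed
  have "D' = h ` D"
  proof
    show "h ` D \<subseteq> D'" using hD by blast
    show "D' \<subseteq> h ` D"
    proof
      fix x assume "x \<in> D'"
      hence "x = h (h' x)" "h' x \<in> D" using hh' hD' by auto
      thus "x \<in> h ` D" by (rule image_eqI)
    qed
  qed
  also have "\<dots> = (\<lambda>d. w ` d) ` D" using hw by (rule image_cong[OF refl])
  finally show ?thesis using wb by blast
qed

theorem theorem1p2:
  fixes n m :: nat and C :: "nat set set"
  assumes "code n C"
    and "m = min_neuron_number n C"
  shows "(\<exists>D. code m D \<and> reduced m D \<and> isomorphic n C m D) \<and>
         (\<forall>D m' D'. code m D \<and> reduced m D \<and> isomorphic n C m D \<and>
             code m' D' \<and> reduced m' D' \<and> isomorphic n C m' D' \<longrightarrow>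
             m = m' \<and> (\<exists>w. bij_betw w {1..m} {1..m} \<and> D' = (\<lambda>d. w ` d) ` D))"
proof -
  define k where "k = card (Irr n C)"
  obtain D0 where D0: "code k D0" "reduced k D0" "isomorphic n C k D0"
    using construct[OF assms(1)] unfolding k_def by blast
  have lb: "k \<le> m'" if "code m' D'" "isomorphic n C m' D'" for m' D'
  proof -
    have "k = card (Irr m' D')" unfolding k_def by (rule iso_card[OF that(2)])
    also have "\<dots> \<le> m'" by (rule Irr_card)
    finally show ?thesis .
  qed
  have "min_neuron_number n C = k"
    unfolding min_neuron_number_def
  proof (rule Least_equality)
    show "\<exists>D. code k D \<and> isomorphic n C k D" using D0 by blast
    fix y assume "\<exists>D. code y D \<and> isomorphic n C y D"
    then obtain D where "code y D" "isomorphic n C y D" by blast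
    thus "k \<le> y" by (rule lb)
  qed
  hence mk: "m = k" using assms(2) by simp
  show ?thesis
  proof (intro conjI allI impI)
    show "\<exists>D. code m D \<and> reduced m D \<and> isomorphic n C m D" using D0 mk by blast
    fix D m' D'
    assume H: "code m D \<and> reduced m D \<and> isomorphic n C m D \<and>
             code m' D' \<and> reduced m' D' \<and> isomorphic n C m' D'"
    have "m' = card (Irr m' D')" using H reduced_card by simp
    also have "\<dots> = k" unfolding k_def using H iso_card by metis
    finally show mm: "m = m'" using mk by simp
    have "isomorphic m D m D'" using iso_between H mm by blast
    thus "\<exists>w. bij_betw w {1..m} {1..m} \<and> D' = (\<lambda>d. w ` d) ` D"
      using perm_unique H mm by blast
  qed
qed

end
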